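(* Let $m>1$, $d\ge 2$ and $t$ be integers with $\gcd(d,m)=1$ and $\gcd(d,t)=1$, and let $a$ be an indeterminate. Then \[ \sum_{k=0}^{m-1}[2dk+t]_{q^2}[2dk+t]^2\frac{(q^{2t};q^{2d})_k^2(aq^{2t};q^{2d})_k(q^{2t}/a;q^{2d})_k}{(q^{2d};q^{2d})_k^2(aq^{2d};q^{2d})_k(q^{2d}/a;q^{2d})_k}q^{-4tk}\equiv 0\pmod{\Phi_m(q^2)}. \]
   Context: For an indeterminate $q$, $(x;q)_k=(1-x)(1-xq)\cdots(1-xq^{k-1})$ (with $(x;q)_0=1$). For any integer $j$, $[j]=(1-q^j)/(1-q)$ and $[j]_{q^2}=(1-q^{2j})/(1-q^2)$. $\Phi_m(x)$ is the $m$-th cyclotomic polynomial, evaluated here at $x=q^2$. A congruence $A\equiv B\pmod{\Phi_m(q^2)}$ between rational functions in $q$ and $a$ means that $A-B$, written as a quotient of polynomials with denominator coprime to $\Phi_m(q^2)$, has numerator divisible by $\Phi_m(q^2)$. *)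

theory Defs
  imports "HOL-Computational_Algebra.Polynomial" "HOL-Computational_Algebra.Fraction_Field"
begin

(* The m-th cyclotomic polynomial over Q, via x^m - 1 = prod_{d | m} Phi_d(x);
   convention Phi_0 = 1 (never used). *)
function cyclotomic :: "nat \<Rightarrow> rat poly" where
  "cyclotomic n = (if n = 0 then 1 else
      (monom 1 n - 1) div prod_list (map cyclotomic (filter (\<lambda>e. e dvd n) [1..<n])))"
  by pat_completeness auto
termination by (relation "measure id") auto

(* Coefficient field K = Q(a); polynomial ring R = K[q]; rational functions F = Q(a)(q) *)
type_synonym KF = "rat poly fract"
type_synonym RP = "KF poly"
type_synonym RF = "RP fract"

definition var_a :: RF where "var_a = Fract [: Fract [:0, 1:] 1 :] 1"
definition var_q :: RF where "var_q = Fract [:0, 1:] 1"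

definition cyclo_q2 :: "nat \<Rightarrow> RP" where
  "cyclo_q2 m = pcompose (map_poly (\<lambda>c. Fract [:c:] 1) (cyclotomic m)) [:0, 0, 1:]"

definition qpoch :: "RF \<Rightarrow> RF \<Rightarrow> nat \<Rightarrow> RF" where
  "qpoch x p k = (\<Prod>i<k. 1 - x * p ^ i)"

definition qint :: "int \<Rightarrow> RF" where
  "qint j = (1 - var_q powi j) / (1 - var_q)"

definition qint2 :: "int \<Rightarrow> RF" where
  "qint2 j = (1 - var_q powi (2 * j)) / (1 - var_q ^ 2)"

definition cong0_mod :: "RF \<Rightarrow> RP \<Rightarrow> bool" where
  "cong0_mod A f \<longleftrightarrow> (\<exists>P Q. Q \<noteq> 0 \<and> coprime Q f \<and> f dvd P \<and> A = Fract P Q)"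

end

theory Submission
  imports Defs "HOL-Computational_Algebra.Polynomial_Factorial" "HOL-Computational_Algebra.Euclidean_Algorithm"
    "HOL-Computational_Algebra.Field_as_Ring"
begin


declare cyclotomic.simps[simp del]

abbreviation EQ :: "nat \<Rightarrow> rat poly" where "EQ n \<equiv> [:0,1:]^n - 1"

lemma cyc_eq:
  assumes "n > 0"
  shows "cyclotomic n = EQ n div prod cyclotomic {e. e dvd n \<and> e < n}"
proof -
  have s: "set (filter (\<lambda>e. e dvd n) [1..<n]) = {e. e dvd n \<and> e < n}"
    using assms by (auto intro: Nat.gr0I)
  have "prod cyclotomic (set (filter (\<lambda>e. e dvd n) [1..<n])) = prod_list (map cyclotomic (filter (\<lambda>e. e dvd n) [1..<n]))"
    by (rule prod.distinct_set_conv_list) simp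
  then have "prod_list (map cyclotomic (filter (\<lambda>e. e dvd n) [1..<n])) = prod cyclotomic {e. e dvd n \<and> e < n}"
    unfolding s by simp
  moreover have "cyclotomic n = (monom 1 n - 1) div prod_list (map cyclotomic (filter (\<lambda>e. e dvd n) [1..<n]))"
    using cyclotomic.simps[of n] assms by simp
  ultimately show ?thesis by (simp add: monom_altdef)
qed

lemma pow_dvd_pow_diff:
  fixes x :: "'a::comm_ring_1"
  assumes "a dvd b" shows "x^a - 1 dvd x^b - 1"
proof -
  obtain c where "b = a * c" using assms by auto
  then have "x^b - 1 = (x^a)^c - 1" by (simp add: power_mult)
  also have "\<dots> = (x^a - 1) * (\<Sum>i<c. (x^a)^i)" by (rule power_diff_1_eq)
  finally show ?thesis by simp
qed

lemma pow_gcd_dvd: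
  fixes x h :: "'a::comm_ring_1"
  assumes "h dvd x^a - 1" "h dvd x^b - 1" "a > 0"
  shows "h dvd x^(gcd a b) - 1"
proof -
  obtain u v where uv: "a * u = b * v + gcd a b" using bezout_nat[of a b] assms(3) by auto
  have "h dvd x^(a*u) - 1" using assms(1) pow_dvd_pow_diff[of a "a*u" x] dvd_trans by auto
  moreover have "h dvd x^(b*v) - 1" using assms(2) pow_dvd_pow_diff[of b "b*v" x] dvd_trans by auto
  moreover have "x^(gcd a b) - 1 = (x^(a*u) - 1) - x^(gcd a b) * (x^(b*v) - 1)"
    by (simp add: uv power_add algebra_simps)
  ultimately show ?thesis by (metis dvd_diff dvd_mult)
qed

lemma sqfree_EQ:
  fixes h :: "rat poly"
  assumes "h * h dvd EQ e" "e > 0"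
  shows "is_unit h"
proof -
  obtain c where c: "EQ e = h * h * c" using assms by auto
  have "pderiv (EQ e) = h * (h * pderiv c + c * pderiv h) + h * c * pderiv h"
    unfolding c by (simp add: pderiv_mult algebra_simps)
  then have d1: "h dvd pderiv (EQ e)" by simp
  have d2: "h dvd EQ e" using c by simp
  have pd: "pderiv (EQ e) = smult (of_nat e) ([:0,1:]^(e-1))"
    using assms(2) by (cases e) (simp_all add: pderiv_diff pderiv_power_Suc pderiv_pCons del: power_Suc)
  have e1: "[:of_nat e:] = smult (of_nat e) ([:0,1:]^e) - smult (of_nat e) (EQ e)"
    by (simp add: smult_diff_right)
  have e2: "smult (of_nat e) ([:0,1:]^e) = [:0,1:] * pderiv (EQ e)"
    unfolding pd using assms(2) by (cases e) (simp_all add: algebra_simps)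
  have "h dvd smult (of_nat e) ([:0,1:]^e) - smult (of_nat e) (EQ e)"
  proof -
    have "h dvd [:0,1:] * pderiv (EQ e)" using d1 by (rule dvd_mult)
    moreover have "h dvd smult (of_nat e) (EQ e)" using d2 by (rule dvd_smult)
    ultimately show ?thesis unfolding e2 by (rule dvd_diff)
  qed
  then have "h dvd [:of_nat e:]" using e1 by simp
  moreover have "is_unit [:(of_nat e :: rat):]" using assms(2) by (simp add: is_unit_const_poly_iff dvd_field_iff)
  ultimately show ?thesis using dvd_unit_imp_unit by blast
qed

lemma prod_divisors_split:
  fixes e :: nat
  assumes "e > 0"
  shows "prod f {h. h dvd e} = f e * prod f {h. h dvd e \<and> h < e}"
proof -
  have "{h. h dvd e} = insert e {h. h dvd e \<and> h < e}"
  proof (rule set_eqI)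
    fix x show "x \<in> {h. h dvd e} \<longleftrightarrow> x \<in> insert e {h. h dvd e \<and> h < e}"
      using dvd_imp_le[of x e] assms by auto
  qed
  moreover have "finite {h. h dvd e \<and> h < e}" by simp
  ultimately show ?thesis by simp
qed

lemma cyc_dvd_from: "0 < e \<Longrightarrow> prod cyclotomic {h. h dvd e} = EQ e \<Longrightarrow> cyclotomic e dvd EQ e"
  using prod_divisors_split[of e cyclotomic] by (metis dvd_triv_left)

lemma cyc_coprime_aux:
  assumes H: "\<And>e'. 0 < e' \<Longrightarrow> e' \<le> e \<Longrightarrow> prod cyclotomic {h. h dvd e'} = EQ e'"
    and e: "e > 0" and j: "j > 0" and nd: "\<not> e dvd j"
  shows "coprime (cyclotomic e) (EQ j)"
proof (rule coprimeI)
  fix c assume c1: "c dvd cyclotomic e" and c2: "c dvd EQ j"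
  define g where "g = gcd e j"
  have g0: "g > 0" using e by (simp add: g_def)
  have gdvd: "g dvd e" by (simp add: g_def)
  have gne: "g \<noteq> e" using nd g_def by (metis gcd_dvd2)
  have gle: "g < e" using gdvd gne e dvd_imp_le by fastforce
  have Ee: "EQ e = cyclotomic e * prod cyclotomic {h. h dvd e \<and> h < e}"
    using H[of e] e prod_divisors_split[OF e, of cyclotomic] by simp
  have "EQ g = prod cyclotomic {h. h dvd g}" using H[of g] g0 gle by simp
  also have "\<dots> dvd prod cyclotomic {h. h dvd e \<and> h < e}"
    by (rule prod_dvd_prod_subset) (use gdvd gle e g0 in \<open>auto intro: dvd_trans, meson dvd_imp_le le_less_trans\<close>)
  finally have "cyclotomic e * EQ g dvd EQ e" unfolding Ee by (rule mult_dvd_mono[OF dvd_refl])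
  moreover have "c dvd EQ e" using c1 Ee by (metis dvd_mult2)
  then have "c dvd EQ g" using pow_gcd_dvd[OF _ c2 e] g_def by simp
  then have "c * c dvd cyclotomic e * EQ g" using c1 by (simp add: mult_dvd_mono)
  ultimately have "c * c dvd EQ e" by (rule dvd_trans[rotated])
  then show "is_unit c" using sqfree_EQ e by blast
qed

lemma cyc_prod: "n > 0 \<Longrightarrow> prod cyclotomic {e. e dvd n} = EQ n"
proof (induction n rule: less_induct)
  case (less n)
  define D where "D = {e. e dvd n \<and> e < n}"
  have finD: "finite D" by (simp add: D_def)
  have Dpos: "e > 0" "e < n" if "e \<in> D" for e
    using that less.prems unfolding D_def by (auto intro: Nat.gr0I)
  have Ddvd: "cyclotomic e dvd EQ e" if "e \<in> D" for e
    by (rule cyc_dvd_from[OF Dpos(1)[OF that] less.IH[OF Dpos(2)[OF that] Dpos(1)[OF that]]])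
  have cyc_dvd: "cyclotomic e dvd EQ n" if "e \<in> D" for e
  proof -
    have "cyclotomic e dvd EQ e" by (rule Ddvd[OF that])
    also have "EQ e dvd EQ n" using that D_def by (simp add: pow_dvd_pow_diff)
    finally show ?thesis .
  qed
  have cop: "coprime (cyclotomic e) (EQ j)" if "e \<in> D" "j > 0" "\<not> e dvd j" for e j
  proof (rule cyc_coprime_aux)
    show "e > 0" using that less.prems D_def by (auto intro: Nat.gr0I)
    show "prod cyclotomic {h. h dvd e'} = EQ e'" if "0 < e'" "e' \<le> e" for e'
      using less.IH[of e'] that \<open>e \<in> D\<close> D_def by simp
  qed (use that in auto)
  have cop2: "coprime (cyclotomic e) (cyclotomic e')" if "e \<in> D" "e' \<in> D" "e \<noteq> e'" for e e'
  proof (cases "e dvd e'")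
    case False
    have "coprime (cyclotomic e) (EQ e')" by (rule cop[OF that(1) Dpos(1)[OF that(2)] False])
    then show ?thesis using coprime_divisors[OF dvd_refl Ddvd[OF that(2)]] by blast
  next
    case True
    then have nd: "\<not> e' dvd e" using that dvd_antisym by blast
    have "coprime (cyclotomic e') (EQ e)" by (rule cop[OF that(2) Dpos(1)[OF that(1)] nd])
    then have "coprime (cyclotomic e') (cyclotomic e)" using coprime_divisors[OF dvd_refl Ddvd[OF that(1)]] by blast
    then show ?thesis by (simp add: coprime_commute)
  qed
  have "A \<subseteq> D \<Longrightarrow> prod cyclotomic A dvd EQ n" for A
  proof (induction A rule: infinite_finite_induct)
    case (infinite A)
    then show ?case using finD finite_subset by blast
  next
    case empty then show ?case by simp
  next
    case (insert e A)
    have "coprime (cyclotomic e) (prod cyclotomic A)"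
    proof (rule prod_coprime_right)
      fix i assume "i \<in> A" then show "coprime (cyclotomic e) (cyclotomic i)"
        using insert cop2[of e i] by auto
    qed
    moreover have "cyclotomic e dvd EQ n" using insert cyc_dvd by simp
    moreover have "prod cyclotomic A dvd EQ n" using insert by simp
    ultimately have "cyclotomic e * prod cyclotomic A dvd EQ n" by (intro divides_mult)
    then show ?case using insert by simp
  qed
  then have PD: "prod cyclotomic D dvd EQ n" by simp
  have "cyclotomic n = EQ n div prod cyclotomic D" using cyc_eq[OF less.prems] D_def by simp
  then have "cyclotomic n * prod cyclotomic D = EQ n" using PD by simp
  then show ?case using prod_divisors_split[OF less.prems, of cyclotomic] D_def by simp
qed

lemma cyc_dvd_EQ: "n > 0 \<Longrightarrow> cyclotomic n dvd EQ n"
  using cyc_prod[of n] cyc_dvd_from by simp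

lemma cyc_coprime: "n > 0 \<Longrightarrow> j > 0 \<Longrightarrow> \<not> n dvd j \<Longrightarrow> coprime (cyclotomic n) (EQ j)"
  by (rule cyc_coprime_aux) (simp_all add: cyc_prod)




definition iota :: "rat \<Rightarrow> KF" where "iota c = Fract [:c:] 1"

lemma iota_add: "iota (x + y) = iota x + iota y" by (simp add: iota_def)
lemma iota_diff: "iota (x - y) = iota x - iota y" by (simp add: iota_def)
lemma iota_mult: "iota (x * y) = iota x * iota y" by (simp add: iota_def ac_simps)
lemma iota_0: "iota 0 = 0" by (simp add: iota_def Zero_fract_def)
lemma iota_1: "iota 1 = 1" by (simp add: iota_def One_fract_def pCons_one)

lemma map_poly_iota_add: "map_poly iota (p + q) = map_poly iota p + map_poly iota q"
  by (intro poly_eqI) (simp add: coeff_map_poly iota_add iota_0)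
lemma map_poly_iota_diff: "map_poly iota (p - q) = map_poly iota p - map_poly iota q"
  by (intro poly_eqI) (simp add: coeff_map_poly iota_diff iota_0)
lemma map_poly_iota_mult: "map_poly iota (p * q) = map_poly iota p * map_poly iota q"
proof (induction p)
  case 0 then show ?case by simp
next
  case (pCons a p)
  have "map_poly iota (pCons a p * q) = map_poly iota (smult a q + pCons 0 (p * q))"
    by simp
  also have "\<dots> = smult (iota a) (map_poly iota q) + pCons 0 (map_poly iota p * map_poly iota q)"
    by (simp add: map_poly_iota_add map_poly_smult iota_0 iota_mult map_poly_pCons pCons.IH)
  also have "\<dots> = map_poly iota (pCons a p) * map_poly iota q"
    by (simp add: map_poly_pCons iota_0)
  finally show ?case .
qed

definition phi :: "rat poly \<Rightarrow> RP" where "phi P = pcompose (map_poly iota P) [:0,0,1:]"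

lemma phi_mult: "phi (p * q) = phi p * phi q"
  by (simp add: phi_def map_poly_iota_mult pcompose_mult)
lemma phi_diff: "phi (p - q) = phi p - phi q"
  by (simp add: phi_def map_poly_iota_diff pcompose_diff)
lemma phi_add: "phi (p + q) = phi p + phi q"
  by (simp add: phi_def map_poly_iota_add pcompose_add)
lemma phi_1: "phi 1 = 1"
  by (simp add: phi_def iota_1 pcompose_1)
lemma phi_X: "phi [:0,1:] = [:0,0,1:]"
  by (simp add: phi_def map_poly_pCons iota_0 iota_1 pcompose_pCons)
lemma phi_pow: "phi (p ^ n) = phi p ^ n"
  by (induction n) (simp_all add: phi_1 phi_mult)
lemma phi_EQ: "phi (EQ n) = [:0,0,1:]^n - 1"
  by (simp add: phi_diff phi_pow phi_X phi_1)

lemma cyclo_q2_phi: "cyclo_q2 m = phi (cyclotomic m)"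
  by (simp add: cyclo_q2_def phi_def iota_def[abs_def])

lemma F_dvd: "m > 0 \<Longrightarrow> cyclo_q2 m dvd [:0,0,1:]^m - 1"
proof -
  assume "m > 0"
  then obtain k where "EQ m = cyclotomic m * k" using cyc_dvd_EQ by blast
  then have "phi (EQ m) = cyclo_q2 m * phi k" by (simp add: phi_mult cyclo_q2_phi)
  then show ?thesis by (simp add: phi_EQ)
qed

lemma bezout_coprime:
  fixes a b u v :: "'a::{algebraic_semidom,comm_ring_1}"
  assumes "u * a + v * b = 1" shows "coprime a b"
proof (rule coprimeI)
  fix c assume "c dvd a" "c dvd b"
  then have "c dvd u * a + v * b" by simp
  then show "is_unit c" using assms by simp
qed

lemma F_coprime:
  assumes "m > 0" "j > 0" "\<not> m dvd j"
  shows "\<exists>u v. u * ([:0,0,1:]^j - 1) + v * cyclo_q2 m = 1"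
proof -
  have c: "coprime (cyclotomic m) (EQ j)" using cyc_coprime assms by blast
  define u where "u = fst (bezout_coefficients (cyclotomic m) (EQ j))"
  define v where "v = snd (bezout_coefficients (cyclotomic m) (EQ j))"
  have "u * cyclotomic m + v * EQ j = gcd (cyclotomic m) (EQ j)"
    unfolding u_def v_def by (rule bezout_coefficients_fst_snd)
  also have "\<dots> = 1" using c by simp
  finally have "phi (u * cyclotomic m + v * EQ j) = 1" by (simp add: phi_1)
  moreover have "phi (u * cyclotomic m + v * EQ j) = phi u * phi (cyclotomic m) + phi v * phi (EQ j)"
    by (simp add: phi_add phi_mult)
  ultimately show ?thesis by (metis cyclo_q2_phi phi_EQ add.commute)
qed




definition bez :: "RP \<Rightarrow> RP \<Rightarrow> bool" where "bez Q f \<longleftrightarrow> (\<exists>u v. u * Q + v * f = 1)"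
definition intg :: "RP \<Rightarrow> RF \<Rightarrow> bool" where
  "intg f A \<longleftrightarrow> (\<exists>P Q. Q \<noteq> 0 \<and> bez Q f \<and> A = Fract P Q)"
definition unitf :: "RP \<Rightarrow> RF \<Rightarrow> bool" where
  "unitf f A \<longleftrightarrow> (\<exists>P Q. P \<noteq> 0 \<and> Q \<noteq> 0 \<and> bez P f \<and> bez Q f \<and> A = Fract P Q)"
definition c0 :: "RP \<Rightarrow> RF \<Rightarrow> bool" where
  "c0 f A \<longleftrightarrow> (\<exists>P Q. Q \<noteq> 0 \<and> bez Q f \<and> f dvd P \<and> A = Fract P Q)"
definition cg :: "RP \<Rightarrow> RF \<Rightarrow> RF \<Rightarrow> bool" where "cg f A B \<longleftrightarrow> c0 f (A - B)"

lemma bez_mult: "bez A f \<Longrightarrow> bez B f \<Longrightarrow> bez (A * B) f"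
proof -
  assume "bez A f" "bez B f"
  then obtain u1 v1 u2 v2 where "u1 * A + v1 * f = 1" "u2 * B + v2 * f = 1" unfolding bez_def by blast
  then have "(u1 * A + v1 * f) * (u2 * B + v2 * f) = 1" by simp
  then have "(u1 * u2) * (A * B) + (v1 * u2 * B + u1 * A * v2 + v1 * v2 * f) * f = 1"
    by (simp add: algebra_simps)
  then show ?thesis unfolding bez_def by blast
qed

lemma bez_1: "bez 1 f" unfolding bez_def by (rule exI[of _ 1], rule exI[of _ 0]) simp

lemma bez_coprime: "bez Q f \<Longrightarrow> coprime Q f"
  unfolding bez_def using bezout_coprime by blast

lemma bez_dvd: "bez (A * B) f \<Longrightarrow> bez A f"
proof -
  assume "bez (A * B) f"
  then obtain u v where "u * (A * B) + v * f = 1" unfolding bez_def by blast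
  then have "(u * B) * A + v * f = 1" by (simp add: ac_simps)
  then show ?thesis unfolding bez_def by blast
qed

lemma bez_const: "f dvd X * Y - [:c:] \<Longrightarrow> c \<noteq> 0 \<Longrightarrow> bez X f"
proof -
  assume a: "f dvd X * Y - [:c:]" "c \<noteq> 0"
  then obtain k where k: "X * Y - [:c:] = f * k" by blast
  have "[:inverse c:] * Y * X + (- [:inverse c:]) * k * f = [:inverse c:] * (X * Y - f * k)"
    by (simp add: algebra_simps)
  also have "X * Y - f * k = X * Y - (X * Y - [:c:])" by (simp add: k)
  then have "X * Y - f * k = [:c:]" by simp
  then have "[:inverse c:] * (X * Y - f * k) = [:inverse c:] * [:c:]" by simp
  also have "\<dots> = 1" using a by (simp add: one_pCons)
  finally show ?thesis unfolding bez_def by blast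
qed

lemma intg_Fract1: "intg f (Fract P 1)"
  unfolding intg_def by (rule exI[of _ P], rule exI[of _ 1]) (simp add: bez_1)
lemma intg_0: "intg f 0" using intg_Fract1[of f 0] by (simp add: Zero_fract_def)
lemma intg_1: "intg f 1" using intg_Fract1[of f 1] by (simp add: One_fract_def)

lemma intg_add: "intg f A \<Longrightarrow> intg f B \<Longrightarrow> intg f (A + B)"
proof -
  assume "intg f A" "intg f B"
  then obtain P1 Q1 P2 Q2 where h: "Q1 \<noteq> 0" "bez Q1 f" "A = Fract P1 Q1" "Q2 \<noteq> 0" "bez Q2 f" "B = Fract P2 Q2"
    unfolding intg_def by blast
  then have "A + B = Fract (P1 * Q2 + P2 * Q1) (Q1 * Q2)" "Q1 * Q2 \<noteq> 0" "bez (Q1 * Q2) f"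
    by (simp_all add: bez_mult)
  then show ?thesis unfolding intg_def by blast
qed
lemma intg_mult: "intg f A \<Longrightarrow> intg f B \<Longrightarrow> intg f (A * B)"
proof -
  assume "intg f A" "intg f B"
  then obtain P1 Q1 P2 Q2 where h: "Q1 \<noteq> 0" "bez Q1 f" "A = Fract P1 Q1" "Q2 \<noteq> 0" "bez Q2 f" "B = Fract P2 Q2"
    unfolding intg_def by blast
  then have "A * B = Fract (P1 * P2) (Q1 * Q2)" "Q1 * Q2 \<noteq> 0" "bez (Q1 * Q2) f"
    by (simp_all add: bez_mult)
  then show ?thesis unfolding intg_def by blast
qed
lemma intg_minus: "intg f A \<Longrightarrow> intg f (- A)"
proof -
  assume "intg f A"
  then obtain P1 Q1 where h: "Q1 \<noteq> 0" "bez Q1 f" "A = Fract P1 Q1"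
    unfolding intg_def by blast
  then have "- A = Fract (- P1) Q1" by simp
  then show ?thesis using h unfolding intg_def by blast
qed
lemma intg_diff: "intg f A \<Longrightarrow> intg f B \<Longrightarrow> intg f (A - B)"
  using intg_add[of f A "- B"] intg_minus by simp
lemma intg_pow: "intg f A \<Longrightarrow> intg f (A ^ n)"
  by (induction n) (simp_all add: intg_1 intg_mult)
lemma intg_prod: "(\<And>i. i \<in> S \<Longrightarrow> intg f (g i)) \<Longrightarrow> intg f (prod g S)"
  by (induction S rule: infinite_finite_induct) (simp_all add: intg_1 intg_mult)
lemma intg_sum: "(\<And>i. i \<in> S \<Longrightarrow> intg f (g i)) \<Longrightarrow> intg f (sum g S)"
  by (induction S rule: infinite_finite_induct) (simp_all add: intg_0 intg_add)

lemma c0_Fract1: "f dvd P \<Longrightarrow> c0 f (Fract P 1)"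
  unfolding c0_def by (rule exI[of _ P], rule exI[of _ 1]) (simp add: bez_1)
lemma c0_intg: "c0 f A \<Longrightarrow> intg f A"
  unfolding c0_def intg_def by blast
lemma c0_0: "c0 f 0"
  using c0_Fract1[of f 0] by (simp add: Zero_fract_def)
lemma c0_add: "c0 f A \<Longrightarrow> c0 f B \<Longrightarrow> c0 f (A + B)"
proof -
  assume "c0 f A" "c0 f B"
  then obtain P1 Q1 P2 Q2 where h: "Q1 \<noteq> 0" "bez Q1 f" "A = Fract P1 Q1" "Q2 \<noteq> 0" "bez Q2 f" "B = Fract P2 Q2"
    "f dvd P1" "f dvd P2"
    unfolding c0_def by blast
  then have "A + B = Fract (P1 * Q2 + P2 * Q1) (Q1 * Q2)" "Q1 * Q2 \<noteq> 0" "bez (Q1 * Q2) f"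
    "f dvd P1 * Q2 + P2 * Q1"
    by (simp_all add: bez_mult)
  then show ?thesis unfolding c0_def by blast
qed
lemma c0_minus: "c0 f A \<Longrightarrow> c0 f (- A)"
proof -
  assume "c0 f A"
  then obtain P1 Q1 where h: "Q1 \<noteq> 0" "bez Q1 f" "A = Fract P1 Q1" "f dvd P1"
    unfolding c0_def by blast
  then have "- A = Fract (- P1) Q1" "f dvd - P1" by simp_all
  then show ?thesis using h unfolding c0_def by blast
qed
lemma c0_diff: "c0 f A \<Longrightarrow> c0 f B \<Longrightarrow> c0 f (A - B)"
  using c0_add[of f A "- B"] c0_minus by simp
lemma c0_mult: "c0 f A \<Longrightarrow> intg f B \<Longrightarrow> c0 f (A * B)"
proof -
  assume "c0 f A" "intg f B"
  then obtain P1 Q1 P2 Q2 where h: "Q1 \<noteq> 0" "bez Q1 f" "A = Fract P1 Q1" "Q2 \<noteq> 0" "bez Q2 f" "B = Fract P2 Q2"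
    "f dvd P1"
    unfolding c0_def intg_def by blast
  then have "A * B = Fract (P1 * P2) (Q1 * Q2)" "Q1 * Q2 \<noteq> 0" "bez (Q1 * Q2) f" "f dvd P1 * P2"
    by (simp_all add: bez_mult)
  then show ?thesis unfolding c0_def by blast
qed
lemma c0_mult': "intg f A \<Longrightarrow> c0 f B \<Longrightarrow> c0 f (A * B)"
  using c0_mult[of f B A] by (simp add: mult.commute)
lemma c0_sum: "(\<And>i. i \<in> S \<Longrightarrow> c0 f (g i)) \<Longrightarrow> c0 f (sum g S)"
  by (induction S rule: infinite_finite_induct) (simp_all add: c0_0 c0_add)


lemma unitf_intg: "unitf f A \<Longrightarrow> intg f A"
  unfolding unitf_def intg_def by blast
lemma unitf_inverse: "unitf f A \<Longrightarrow> unitf f (inverse A)"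
proof -
  assume "unitf f A"
  then obtain P1 Q1 where h: "P1 \<noteq> 0" "Q1 \<noteq> 0" "bez P1 f" "bez Q1 f" "A = Fract P1 Q1"
    unfolding unitf_def by blast
  then have "inverse A = Fract Q1 P1" by simp
  then show ?thesis using h unfolding unitf_def by blast
qed
lemma unitf_mult: "unitf f A \<Longrightarrow> unitf f B \<Longrightarrow> unitf f (A * B)"
proof -
  assume "unitf f A" "unitf f B"
  then obtain P1 Q1 P2 Q2 where h: "P1 \<noteq> 0" "Q1 \<noteq> 0" "bez P1 f" "bez Q1 f" "A = Fract P1 Q1"
     "P2 \<noteq> 0" "Q2 \<noteq> 0" "bez P2 f" "bez Q2 f" "B = Fract P2 Q2"
    unfolding unitf_def by blast
  then have "A * B = Fract (P1 * P2) (Q1 * Q2)" "Q1 * Q2 \<noteq> 0" "bez (Q1 * Q2) f"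
     "P1 * P2 \<noteq> 0" "bez (P1 * P2) f"
    by (simp_all add: bez_mult)
  then show ?thesis unfolding unitf_def by blast
qed
lemma unitf_1: "unitf f 1"
  unfolding unitf_def by (rule exI[of _ 1], rule exI[of _ 1]) (simp add: bez_1 One_fract_def)
lemma unitf_pow: "unitf f A \<Longrightarrow> unitf f (A ^ n)"
  by (induction n) (simp_all add: unitf_1 unitf_mult)
lemma unitf_prod: "(\<And>i. i \<in> S \<Longrightarrow> unitf f (g i)) \<Longrightarrow> unitf f (prod g S)"
  by (induction S rule: infinite_finite_induct) (simp_all add: unitf_1 unitf_mult)
lemma unitf_Fract1: "P \<noteq> 0 \<Longrightarrow> bez P f \<Longrightarrow> unitf f (Fract P 1)"
  unfolding unitf_def by (rule exI[of _ P], rule exI[of _ 1]) (simp add: bez_1)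
lemma unitf_nz: "unitf f A \<Longrightarrow> A \<noteq> 0"
  unfolding unitf_def by (auto simp: eq_fract Zero_fract_def)
lemma unitf_divide: "unitf f A \<Longrightarrow> unitf f B \<Longrightarrow> unitf f (A / B)"
  by (simp add: divide_inverse unitf_mult unitf_inverse)
lemma unitf_powi: "unitf f A \<Longrightarrow> unitf f (A powi e)"
  by (cases "e \<ge> 0") (auto simp: power_int_def unitf_pow unitf_inverse)

lemma intg_divide: "intg f A \<Longrightarrow> unitf f B \<Longrightarrow> intg f (A / B)"
  by (simp add: divide_inverse intg_mult unitf_intg unitf_inverse)
lemma c0_divide: "c0 f A \<Longrightarrow> unitf f B \<Longrightarrow> c0 f (A / B)"
  by (simp add: divide_inverse c0_mult unitf_intg unitf_inverse)
lemma c0_cancel: "c0 f (A * U) \<Longrightarrow> unitf f U \<Longrightarrow> c0 f A"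
  using c0_divide[of f "A * U" U] unitf_nz[of f U] by simp

lemma cg_refl: "cg f A A" by (simp add: cg_def c0_0)
lemma cg_sym: "cg f A B \<Longrightarrow> cg f B A"
  unfolding cg_def using c0_minus by fastforce
lemma cg_trans: "cg f A B \<Longrightarrow> cg f B C \<Longrightarrow> cg f A C"
  unfolding cg_def using c0_add by fastforce
lemma cg_add: "cg f A A' \<Longrightarrow> cg f B B' \<Longrightarrow> cg f (A + B) (A' + B')"
  unfolding cg_def using c0_add by (fastforce simp: algebra_simps)
lemma cg_diff: "cg f A A' \<Longrightarrow> cg f B B' \<Longrightarrow> cg f (A - B) (A' - B')"
  unfolding cg_def using c0_diff by (fastforce simp: algebra_simps)
lemma cg_mult: "cg f A A' \<Longrightarrow> cg f B B' \<Longrightarrow> intg f B \<Longrightarrow> intg f A' \<Longrightarrow> cg f (A * B) (A' * B')"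
proof -
  assume a: "cg f A A'" "cg f B B'" "intg f B" "intg f A'"
  have "A * B - A' * B' = (A - A') * B + A' * (B - B')" by (simp add: algebra_simps)
  moreover have "c0 f ((A - A') * B + A' * (B - B'))"
    using a unfolding cg_def by (intro c0_add c0_mult c0_mult')
  ultimately show ?thesis unfolding cg_def by simp
qed
lemma cg_mult_left: "cg f B B' \<Longrightarrow> intg f A \<Longrightarrow> intg f B \<Longrightarrow> cg f (A * B) (A * B')"
  by (rule cg_mult[OF cg_refl])
lemma cg_intg: "cg f A B \<Longrightarrow> intg f B \<Longrightarrow> intg f A"
  unfolding cg_def using intg_add[OF c0_intg] by fastforce
lemma cg_c0: "cg f A B \<Longrightarrow> c0 f B \<Longrightarrow> c0 f A"
  unfolding cg_def using c0_add by fastforce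
lemma cg_pow: "cg f A B \<Longrightarrow> intg f A \<Longrightarrow> intg f B \<Longrightarrow> cg f (A ^ n) (B ^ n)"
  by (induction n) (simp_all add: cg_refl cg_mult intg_pow)
lemma cg_prod: "(\<And>i. i \<in> S \<Longrightarrow> cg f (g i) (h i) \<and> intg f (g i) \<and> intg f (h i)) \<Longrightarrow> cg f (prod g S) (prod h S)"
proof (induction S rule: infinite_finite_induct)
  case (insert x F)
  then show ?case by (simp add: cg_mult intg_prod)
qed (simp_all add: cg_refl)
lemma cg_sum: "(\<And>i. i \<in> S \<Longrightarrow> cg f (g i) (h i)) \<Longrightarrow> cg f (sum g S) (sum h S)"
proof (induction S rule: infinite_finite_induct)
  case (insert x F)
  then show ?case by (simp add: cg_add)
qed (simp_all add: cg_refl)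
lemma cg_divide: "cg f A A' \<Longrightarrow> unitf f B \<Longrightarrow> cg f (A / B) (A' / B)"
  unfolding cg_def using c0_divide by (fastforce simp: diff_divide_distrib)

lemma c0_cong0_mod: "c0 f A \<Longrightarrow> cong0_mod A f"
  unfolding c0_def cong0_mod_def using bez_coprime by blast




abbreviation Xq :: RP where "Xq \<equiv> [:0,1:]"
abbreviation Zq :: RP where "Zq \<equiv> [:0,0,1:]"
definition alpha :: KF where "alpha = Fract [:0,1:] 1"

lemma Fract1_eq0: "Fract (P::'a::idom) 1 = 0 \<longleftrightarrow> P = 0"
proof -
  have "Fract P 1 = Fract 0 1 \<longleftrightarrow> P * 1 = 0 * 1" by (rule eq_fract(1)) simp_all
  then show ?thesis by (simp add: Zero_fract_def)
qed

lemma Fract1_pow: "Fract (P::'a::idom) 1 ^ n = Fract (P ^ n) 1"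
  by (induction n) (simp_all add: One_fract_def)

lemma sq_diff_lemma: "(1 + x) * (1 - x) = 1 - (x::'a::comm_ring_1)^2"
  by (simp add: algebra_simps power2_eq_square)

lemma bez_aux: "u * (z - 1) + v * f = (1::'a::comm_ring_1) \<Longrightarrow> z - 1 = - (a * b) \<Longrightarrow> (- u * a) * b + v * f = 1"
  by (simp add: algebra_simps)

lemma Xq_sq: "Xq ^ 2 = Zq" by (simp add: power2_eq_square)

lemma var_q_pow: "var_q ^ n = Fract (Xq ^ n) 1"
  by (simp add: var_q_def Fract1_pow)

lemma var_q_pow2: "var_q ^ (2 * j) = Fract (Zq ^ j) 1"
  by (simp add: var_q_pow power_mult Xq_sq Fract1_pow)

lemma var_q_nz: "var_q \<noteq> 0"
  by (simp add: var_q_def Fract1_eq0)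

lemma alpha_nz: "alpha \<noteq> 0"
  by (simp add: alpha_def Fract1_eq0)

lemma var_a_alpha: "var_a = Fract [:alpha:] 1"
  by (simp add: var_a_def alpha_def)

lemma var_a_nz: "var_a \<noteq> 0"
  by (simp add: var_a_alpha Fract1_eq0 alpha_nz)

lemma alpha_pow_ne1: "m > 0 \<Longrightarrow> alpha ^ m \<noteq> 1"
proof
  assume m: "m > 0" and h: "alpha ^ m = 1"
  have "alpha ^ m = Fract ([:0,1:] ^ m) 1"
    by (induction m) (simp_all add: alpha_def One_fract_def)
  then have "([:0,1:] :: rat poly) ^ m = 1" using h by (simp add: One_fract_def eq_fract)
  then have "poly (([:0,1:] :: rat poly) ^ m) 0 = poly 1 0" by simp
  then show False using m by (simp add: power_0_left)
qed

context
  fixes m :: nat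
  assumes m1: "m > 1"
begin

abbreviation F :: RP where "F \<equiv> cyclo_q2 m"

lemma F_dvd_Zm: "F dvd Zq ^ m - 1" using F_dvd m1 by simp

lemma F_dvd_Zmk: "F dvd Zq ^ (m * k) - 1"
  using F_dvd_Zm pow_dvd_pow_diff[of m "m * k" Zq] dvd_trans by auto

lemma bez_Xq: "bez Xq F"
proof (rule bez_const)
  have "Xq * Xq ^ (2 * m - 1) - [:1:] = Xq ^ (2 * m) - 1"
    using m1 by (simp add: one_pCons flip: power_Suc)
  also have "\<dots> = Zq ^ m - 1" by (simp add: power_mult Xq_sq)
  finally show "F dvd Xq * Xq ^ (2 * m - 1) - [:1:]" using F_dvd_Zm by simp
qed simp

lemma unitf_q: "unitf F var_q"
  unfolding var_q_def by (rule unitf_Fract1) (simp_all add: bez_Xq)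

lemma unitf_q_powi: "unitf F (var_q powi e)"
  by (rule unitf_powi[OF unitf_q])

lemma intg_q_powi: "intg F (var_q powi e)"
  by (rule unitf_intg[OF unitf_q_powi])

lemma c0_q_2mk: "c0 F (var_q ^ (2 * m * k) - 1)"
proof -
  have "var_q ^ (2 * m * k) - 1 = Fract (Zq ^ (m * k) - 1) 1"
    by (simp add: var_q_pow2 mult.assoc One_fract_def)
  then show ?thesis using c0_Fract1[OF F_dvd_Zmk] by simp
qed

lemma c0_q_powi: "c0 F (var_q powi (2 * int m * s) - 1)"
proof (cases "s \<ge> 0")
  case True
  then have "var_q powi (2 * int m * s) = var_q ^ (2 * m * nat s)"
  proof -
    have "2 * int m * s = int (2 * m * nat s)" using True by simp
    then show ?thesis by (simp only: power_int_of_nat)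
  qed
  then show ?thesis using c0_q_2mk by simp
next
  case False
  define k where "k = nat (- s)"
  have e: "2 * int m * s = - int (2 * m * k)" using False k_def by simp
  have "var_q powi (2 * int m * s) = inverse (var_q ^ (2 * m * k))"
    unfolding e by (simp only: power_int_minus power_int_of_nat)
  moreover have "inverse (var_q ^ (2 * m * k)) - 1 = - (var_q ^ (2 * m * k) - 1) * inverse (var_q ^ (2 * m * k))"
    using var_q_nz by (simp add: field_simps)
  moreover have "c0 F (- (var_q ^ (2 * m * k) - 1) * inverse (var_q ^ (2 * m * k)))"
    by (intro c0_mult c0_minus c0_q_2mk unitf_intg unitf_inverse unitf_pow unitf_q)
  ultimately show ?thesis by simp
qed

lemma cg_q_powi: "e - e' = 2 * int m * z \<Longrightarrow> cg F (var_q powi e) (var_q powi e')"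
proof -
  assume h: "e - e' = 2 * int m * z"
  have "var_q powi e = var_q powi e' * var_q powi (2 * int m * z)"
    using var_q_nz h by (metis add.commute diff_add_cancel power_int_add)
  then have "var_q powi e - var_q powi e' = (var_q powi (2 * int m * z) - 1) * var_q powi e'"
    by (simp add: algebra_simps)
  moreover have "c0 F ((var_q powi (2 * int m * z) - 1) * var_q powi e')"
    by (intro c0_mult c0_q_powi intg_q_powi)
  ultimately show ?thesis unfolding cg_def by simp
qed

lemma unitf_1_q2j: "j > 0 \<Longrightarrow> \<not> m dvd j \<Longrightarrow> unitf F (1 - var_q ^ (2 * j))"
proof -
  assume j: "j > 0" "\<not> m dvd j"
  obtain u v where uv: "u * (Zq ^ j - 1) + v * F = 1" using F_coprime[of m j] m1 j by auto
  then have "(- u) * (1 - Zq ^ j) + v * F = 1" by (simp add: algebra_simps)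
  then have b: "bez (1 - Zq ^ j) F" unfolding bez_def by blast
  have nz: "1 - Zq ^ j \<noteq> 0"
  proof
    assume "1 - Zq ^ j = 0"
    then have "poly (1 - Zq ^ j) 0 = 0" by simp
    then show False using j by (simp add: power_0_left)
  qed
  have "1 - var_q ^ (2 * j) = Fract (1 - Zq ^ j) 1" by (simp add: var_q_pow2 One_fract_def)
  then show ?thesis using unitf_Fract1[OF nz b] by simp
qed

lemma bez_1_cZ:
  fixes c :: KF
  assumes "c ^ m \<noteq> 1"
  shows "bez (1 - [:c:] * Zq ^ j) F"
proof (rule bez_const)
  define W where "W = [:c:] * Zq ^ j"
  have "(1 - W) * (\<Sum>i<m. W ^ i) = 1 - W ^ m"
    using power_diff_1_eq[of W m] by (simp add: algebra_simps)
  moreover have "W ^ m = [:c ^ m:] * Zq ^ (m * j)"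
  proof -
    have "W ^ m = [:c:] ^ m * (Zq ^ j) ^ m" by (simp only: W_def power_mult_distrib)
    then show ?thesis by (simp only: poly_const_pow power_mult mult.commute)
  qed
  moreover have "[:1 - c ^ m:] = 1 - [:c ^ m:]" by (simp add: one_pCons)
  moreover have "\<And>S W' C (ZZ::RP). S = 1 - W' \<Longrightarrow> W' = C * ZZ \<Longrightarrow> S - (1 - C) = C * (1 - ZZ)"
    by (simp add: algebra_simps)
  ultimately have "(1 - W) * (\<Sum>i<m. W ^ i) - [:1 - c ^ m:] = [:c ^ m:] * (1 - Zq ^ (m * j))"
    by metis
  moreover have "F dvd [:c ^ m:] * (1 - Zq ^ (m * j))"
    using F_dvd_Zmk[of j] by (metis dvd_minus_iff dvd_mult minus_diff_eq)
  ultimately show "F dvd (1 - [:c:] * Zq ^ j) * (\<Sum>i<m. W ^ i) - [:1 - c ^ m:]"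
    by (simp add: W_def)
  show "1 - c ^ m \<noteq> 0" using assms by simp
qed

lemma nz_1_cZ: "c \<noteq> 1 \<Longrightarrow> 1 - [:c:] * Zq ^ j \<noteq> 0"
proof
  assume "c \<noteq> 1" "1 - [:c:] * Zq ^ j = 0"
  then have "poly (1 - [:c:] * Zq ^ j) 0 = 0" by simp
  then show False using \<open>c \<noteq> 1\<close> by (cases j) simp_all
qed

lemma alpha_ne1: "alpha \<noteq> 1" using alpha_pow_ne1[of 1] by simp
lemma ialpha_ne1: "inverse alpha \<noteq> 1" using alpha_ne1 by (metis inverse_1 inverse_inverse_eq)

lemma unitf_1_aq: "unitf F (1 - var_a * var_q ^ (2 * j))"
proof -
  have "1 - var_a * var_q ^ (2 * j) = Fract (1 - [:alpha:] * Zq ^ j) 1"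
    by (simp add: var_q_pow2 var_a_alpha One_fract_def)
  moreover have "bez (1 - [:alpha:] * Zq ^ j) F"
    by (rule bez_1_cZ) (use alpha_pow_ne1 m1 in simp)
  ultimately show ?thesis using unitf_Fract1 nz_1_cZ alpha_ne1 ialpha_ne1 by simp
qed

lemma unitf_1_qa: "unitf F (1 - var_q ^ (2 * j) / var_a)"
proof -
  have "var_q ^ (2 * j) / var_a = Fract ([:inverse alpha:] * Zq ^ j) 1"
    using alpha_nz by (simp add: var_q_pow2 var_a_alpha eq_fract)
  then have "1 - var_q ^ (2 * j) / var_a = Fract (1 - [:inverse alpha:] * Zq ^ j) 1"
    by (simp add: One_fract_def)
  moreover have "bez (1 - [:inverse alpha:] * Zq ^ j) F"
    by (rule bez_1_cZ) (use alpha_pow_ne1 m1 in \<open>simp add: power_inverse\<close>)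
  ultimately show ?thesis using unitf_Fract1 nz_1_cZ alpha_ne1 ialpha_ne1 by simp
qed

lemma unitf_1_q2: "unitf F (1 - var_q ^ 2)"
  using unitf_1_q2j[of 1] m1 by simp

lemma unitf_1_q: "unitf F (1 - var_q)"
proof -
  obtain u v where "u * (Zq ^ 1 - 1) + v * F = 1" using F_coprime[of m 1] m1 by auto
  moreover have "Zq ^ 1 - 1 = - ((1 + Xq) * (1 - Xq))"
    unfolding sq_diff_lemma Xq_sq by simp
  ultimately have "(- u * (1 + Xq)) * (1 - Xq) + v * F = 1"
    by (rule bez_aux)
  then have b: "bez (1 - Xq) F" unfolding bez_def by blast
  have nz: "1 - Xq \<noteq> 0"
  proof
    assume "1 - Xq = 0"
    then have "poly (1 - Xq) 0 = 0" by simp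
    then show False by simp
  qed
  have "1 - var_q = Fract (1 - Xq) 1" by (simp add: var_q_def One_fract_def)
  then show ?thesis using unitf_Fract1[OF nz b] by simp
qed

lemma unitf_2: "unitf F 2"
proof -
  have "(of_nat 2::RF) = Fract (of_nat 2) 1" by (rule of_nat_fract)
  then have "(2::RF) = Fract 2 1" by simp
  moreover have "[:1/2:] * (2::RP) + 0 * F = 1"
    by (simp add: numeral_poly one_pCons)
  then have "bez 2 F" unfolding bez_def by blast
  then have "unitf F (Fract 2 1)" by (intro unitf_Fract1) simp_all
  ultimately show ?thesis by simp
qed

end



definition HH :: "RF \<Rightarrow> RF" where
  "HH x = (1 - x)^2 * (1 - var_a * x) * (1 - x / var_a)"

definition gg :: "nat \<Rightarrow> nat \<Rightarrow> RF" where
  "gg d j = HH ((var_q ^ (2 * d)) ^ j)"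

definition GG :: "nat \<Rightarrow> nat \<Rightarrow> RF" where
  "GG d l = (\<Prod>i<l. gg d (Suc i))"

lemma HH_inv: "W \<noteq> 0 \<Longrightarrow> HH (inverse W) = inverse (W ^ 4) * HH W"
  using var_a_nz by (simp add: HH_def field_simps) (simp add: algebra_simps power2_eq_square power4_eq_xxxx)

lemma qpoch_D: "qpoch (var_q ^ (2 * d)) (var_q ^ (2 * d)) k ^ 2 * qpoch (var_a * var_q ^ (2 * d)) (var_q ^ (2 * d)) k *
        qpoch (var_q ^ (2 * d) / var_a) (var_q ^ (2 * d)) k = GG d k"
proof -
  let ?p = "var_q ^ (2 * d)"
  have "qpoch ?p ?p k ^ 2 * qpoch (var_a * ?p) ?p k * qpoch (?p / var_a) ?p k =
    (\<Prod>i<k. (1 - ?p * ?p ^ i)^2 * (1 - var_a * ?p * ?p ^ i) * (1 - ?p / var_a * ?p ^ i))"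
    by (simp add: qpoch_def prod_power_distrib prod.distrib)
  also have "\<dots> = (\<Prod>i<k. gg d (Suc i))"
    by (rule prod.cong) (simp_all add: gg_def HH_def mult.assoc)
  finally show ?thesis by (simp add: GG_def)
qed

lemma qpoch_N: "qpoch Y (var_q ^ (2 * d)) k ^ 2 * qpoch (var_a * Y) (var_q ^ (2 * d)) k *
        qpoch (Y / var_a) (var_q ^ (2 * d)) k = (\<Prod>i<k. HH (Y * (var_q ^ (2 * d)) ^ i))"
proof -
  let ?p = "var_q ^ (2 * d)"
  have "qpoch Y ?p k ^ 2 * qpoch (var_a * Y) ?p k * qpoch (Y / var_a) ?p k =
    (\<Prod>i<k. (1 - Y * ?p ^ i)^2 * (1 - var_a * Y * ?p ^ i) * (1 - Y / var_a * ?p ^ i))"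
    by (simp add: qpoch_def prod_power_distrib prod.distrib)
  also have "\<dots> = (\<Prod>i<k. HH (Y * ?p ^ i))"
    by (rule prod.cong) (simp_all add: HH_def mult.assoc)
  finally show ?thesis .
qed

lemma unitf_a: "unitf f var_a"
proof -
  have "[:inverse alpha:] * [:alpha:] + 0 * f = 1" using alpha_nz by (simp add: one_pCons)
  then have "bez [:alpha:] f" unfolding bez_def by blast
  then show ?thesis unfolding var_a_alpha using alpha_nz by (intro unitf_Fract1) simp_all
qed

lemma intg_HH: "intg f x \<Longrightarrow> intg f (HH x)"
  unfolding HH_def
  by (intro intg_mult intg_pow intg_diff intg_1 intg_divide unitf_a unitf_intg[OF unitf_a])

lemma cg_HH: "cg f x x' \<Longrightarrow> intg f x \<Longrightarrow> intg f x' \<Longrightarrow> cg f (HH x) (HH x')"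
  unfolding HH_def
  by (intro cg_mult cg_pow cg_diff cg_refl cg_mult_left cg_divide unitf_a unitf_intg[OF unitf_a]
        intg_mult intg_pow intg_diff intg_1 intg_divide)

context
  fixes m d :: nat
  assumes m1: "m > 1" and cdm: "coprime d m"
begin

lemma unitf_gg: "0 < j \<Longrightarrow> j < m \<Longrightarrow> unitf (cyclo_q2 m) (gg d j)"
proof -
  assume j: "0 < j" "j < m"
  have d0: "d > 0" using cdm m1 by (cases "d = 0") auto
  have nd: "\<not> m dvd d * j"
  proof
    assume "m dvd d * j"
    then have "m dvd j" using cdm by (metis coprime_commute coprime_dvd_mult_right_iff)
    then show False using j by (simp add: nat_dvd_not_less)
  qed
  have e: "(var_q ^ (2 * d)) ^ j = var_q ^ (2 * (d * j))" by (simp add: power_mult mult.assoc)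
  have "unitf (cyclo_q2 m) (1 - var_q ^ (2 * (d * j)))"
    by (rule unitf_1_q2j[OF m1]) (use d0 j nd in simp_all)
  moreover have "unitf (cyclo_q2 m) (1 - var_a * var_q ^ (2 * (d * j)))" by (rule unitf_1_aq[OF m1])
  moreover have "unitf (cyclo_q2 m) (1 - var_q ^ (2 * (d * j)) / var_a)" by (rule unitf_1_qa[OF m1])
  ultimately show ?thesis unfolding gg_def HH_def e by (intro unitf_mult unitf_pow)
qed

lemma unitf_GG: "l < m \<Longrightarrow> unitf (cyclo_q2 m) (GG d l)"
  unfolding GG_def by (intro unitf_prod unitf_gg) auto

lemma intg_gg: "intg (cyclo_q2 m) (gg d j)"
  unfolding gg_def
  by (intro intg_HH intg_pow unitf_intg[OF unitf_q[OF m1]])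

end




definition TT :: "nat \<Rightarrow> int \<Rightarrow> nat \<Rightarrow> RF" where
  "TT d t k = qint2 (2 * int d * int k + t) * (qint (2 * int d * int k + t))^2 *
       (qpoch (var_q powi (2 * t)) (var_q ^ (2 * d)) k ^ 2 *
        qpoch (var_a * var_q powi (2 * t)) (var_q ^ (2 * d)) k *
        qpoch (var_q powi (2 * t) / var_a) (var_q ^ (2 * d)) k) /
       (qpoch (var_q ^ (2 * d)) (var_q ^ (2 * d)) k ^ 2 *
        qpoch (var_a * var_q ^ (2 * d)) (var_q ^ (2 * d)) k *
        qpoch (var_q ^ (2 * d) / var_a) (var_q ^ (2 * d)) k) *
       var_q powi (- 4 * t * int k)"

definition CC :: RF where "CC = inverse ((1 - var_q ^ 2) * (1 - var_q) ^ 2)"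
definition EE :: "nat \<Rightarrow> nat \<Rightarrow> nat \<Rightarrow> int" where
  "EE d n k = - (4 * int d * int k * (2 * int n + 1 - int k))"
definition ff :: "nat \<Rightarrow> int \<Rightarrow> nat \<Rightarrow> nat \<Rightarrow> RF" where
  "ff d t n k = (1 - var_q powi (2 * (2 * int d * int k + t))) * (1 - var_q powi (2 * int d * int k + t)) ^ 2 *
     (var_q powi (EE d n k) * var_q powi (- 4 * t * int k))"
definition BB :: "nat \<Rightarrow> nat \<Rightarrow> nat \<Rightarrow> RF" where
  "BB d n k = GG d n / (GG d k * GG d (n - k))"

lemma field_aux: "(x::'a::field) \<noteq> 0 \<Longrightarrow>
   (1 - inverse (x * x)) * (1 - inverse x) ^ 2 * (P * (x * x * (x * x))) = - ((1 - x * x) * (1 - x) ^ 2) * P"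
  by (simp add: field_simps power2_eq_square)

lemma q_pow_powi: "var_q ^ j = var_q powi (int j)" by simp

lemma q_pow_pow: "(var_q ^ a) ^ b = var_q powi (int a * int b)"
proof -
  have "(var_q ^ a) ^ b = var_q ^ (a * b)" by (simp add: power_mult)
  also have "\<dots> = var_q powi (int (a * b))" by (rule q_pow_powi)
  finally show ?thesis by simp
qed

lemma pp_pow: "(var_q ^ (2 * d)) ^ i = var_q powi (2 * int d * int i)"
  using q_pow_pow[of "2 * d" i] by simp

lemma Yp_eq: "var_q powi (2 * t) * (var_q ^ (2 * d)) ^ i = var_q powi (2 * t + 2 * int d * int i)"
proof -
  have "(var_q ^ (2 * d)) ^ i = var_q powi (2 * int d * int i)" by (rule pp_pow)
  then show ?thesis using var_q_nz by (simp add: power_int_add)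
qed

context
  fixes m d :: nat and t s :: int and n :: nat
  assumes m1: "m > 1" and cdm: "coprime d m" and nm: "n < m"
    and hts: "t + int d * int n = int m * s"
begin

abbreviation "FF \<equiv> cyclo_q2 m"
abbreviation "pp \<equiv> var_q ^ (2 * d)"
abbreviation "YY \<equiv> var_q powi (2 * t)"

lemma intg_qp: "intg FF (var_q powi e)" by (rule intg_q_powi[OF m1])
lemma intg_qn: "intg FF (var_q ^ j)" using intg_qp[of "int j"] by simp

lemma cg_Yp: "i \<le> n \<Longrightarrow> cg FF (YY * pp ^ i) (inverse (pp ^ (n - i)))"
proof -
  assume i: "i \<le> n"
  have "inverse (pp ^ (n - i)) = var_q powi (- (2 * int d * int (n - i)))"
    by (simp add: power_int_minus pp_pow del: power_int_of_nat)
  moreover have "cg FF (var_q powi (2 * t + 2 * int d * int i)) (var_q powi (- (2 * int d * int (n - i))))"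
  proof (rule cg_q_powi[OF m1])
    show "2 * t + 2 * int d * int i - - (2 * int d * int (n - i)) = 2 * int m * s"
      using i hts by (simp add: of_nat_diff algebra_simps)
  qed
  ultimately show ?thesis by (simp add: Yp_eq)
qed

lemma cg_h: "i \<le> n \<Longrightarrow> cg FF (HH (YY * pp ^ i)) (inverse ((pp ^ (n - i)) ^ 4) * gg d (n - i))"
proof -
  assume i: "i \<le> n"
  have "cg FF (HH (YY * pp ^ i)) (HH (inverse (pp ^ (n - i))))"
  proof (rule cg_HH[OF cg_Yp[OF i]])
    show "intg FF (YY * pp ^ i)" by (simp add: Yp_eq intg_qp)
    show "intg FF (inverse (pp ^ (n - i)))"
      by (intro unitf_intg unitf_inverse unitf_pow unitf_q[OF m1])
  qed
  moreover have "HH (inverse (pp ^ (n - i))) = inverse ((pp ^ (n - i)) ^ 4) * gg d (n - i)"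
    using var_q_nz by (simp add: HH_inv gg_def)
  ultimately show ?thesis by simp
qed

lemma prod_qinv: "k \<le> n \<Longrightarrow> (\<Prod>i<k. inverse ((pp ^ (n - i)) ^ 4)) =
    var_q powi (- (4 * int d * int k * (2 * int n + 1 - int k)))"
proof (induction k)
  case 0 then show ?case by simp
next
  case (Suc k)
  then have IH: "(\<Prod>i<k. inverse ((pp ^ (n - i)) ^ 4)) = var_q powi (- (4 * int d * int k * (2 * int n + 1 - int k)))"
    by simp
  have "inverse ((pp ^ (n - k)) ^ 4) = var_q powi (- (8 * int d * int (n - k)))"
  proof -
    have "(pp ^ (n - k)) ^ 4 = var_q powi (8 * int d * int (n - k))"
      using q_pow_pow[of "2 * d * (n - k)" 4] by (simp add: power_mult[symmetric] ac_simps)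
    then show ?thesis by (simp add: power_int_minus del: power_int_of_nat)
  qed
  then have "(\<Prod>i<Suc k. inverse ((pp ^ (n - i)) ^ 4)) =
     var_q powi (- (4 * int d * int k * (2 * int n + 1 - int k))) * var_q powi (- (8 * int d * int (n - k)))"
    by (simp add: IH)
  also have "\<dots> = var_q powi (- (4 * int d * int k * (2 * int n + 1 - int k)) + - (8 * int d * int (n - k)))"
    by (subst power_int_add) (simp_all add: var_q_nz)
  also have "- (4 * int d * int k * (2 * int n + 1 - int k)) + - (8 * int d * int (n - k)) =
      - (4 * int d * int (Suc k) * (2 * int n + 1 - int (Suc k)))"
    using Suc.prems by (simp add: of_nat_diff algebra_simps)
  finally show ?case .
qed

lemma prod_gg: "k \<le> n \<Longrightarrow> (\<Prod>i<k. gg d (n - i)) * GG d (n - k) = GG d n"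
proof (induction k)
  case 0 then show ?case by simp
next
  case (Suc k)
  have "GG d (n - k) = GG d (n - Suc k) * gg d (n - k)"
    using Suc.prems by (simp add: GG_def Suc_diff_Suc[symmetric] del: Suc_diff_Suc)
  then show ?case using Suc by (simp add: ac_simps)
qed

lemma cg_N: "k \<le> n \<Longrightarrow> cg FF
   (qpoch YY pp k ^ 2 * qpoch (var_a * YY) pp k * qpoch (YY / var_a) pp k)
   (var_q powi (- (4 * int d * int k * (2 * int n + 1 - int k))) * (GG d n / GG d (n - k)))"
proof -
  assume k: "k \<le> n"
  have "cg FF (\<Prod>i<k. HH (YY * pp ^ i)) (\<Prod>i<k. inverse ((pp ^ (n - i)) ^ 4) * gg d (n - i))"
  proof (rule cg_prod)
    fix i assume "i \<in> {..<k}"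
    then have i: "i \<le> n" using k by simp
    show "cg FF (HH (YY * pp ^ i)) (inverse ((pp ^ (n - i)) ^ 4) * gg d (n - i)) \<and>
        intg FF (HH (YY * pp ^ i)) \<and> intg FF (inverse ((pp ^ (n - i)) ^ 4) * gg d (n - i))"
    proof (intro conjI)
      show "cg FF (HH (YY * pp ^ i)) (inverse ((pp ^ (n - i)) ^ 4) * gg d (n - i))" by (rule cg_h[OF i])
      show "intg FF (HH (YY * pp ^ i))" by (simp add: Yp_eq intg_HH intg_qp)
      have "unitf FF (inverse ((pp ^ (n - i)) ^ 4))" by (intro unitf_inverse unitf_pow unitf_q[OF m1])
      then show "intg FF (inverse ((pp ^ (n - i)) ^ 4) * gg d (n - i))"
        by (intro intg_mult unitf_intg intg_gg[OF m1 cdm])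
    qed
  qed
  moreover have "(\<Prod>i<k. inverse ((pp ^ (n - i)) ^ 4) * gg d (n - i)) =
      var_q powi (- (4 * int d * int k * (2 * int n + 1 - int k))) * (GG d n / GG d (n - k))"
  proof -
    have "GG d (n - k) \<noteq> 0" using unitf_nz[OF unitf_GG[OF m1 cdm]] nm by simp
    then have "(\<Prod>i<k. gg d (n - i)) = GG d n / GG d (n - k)"
      using prod_gg[OF k] by (simp add: field_simps)
    then show ?thesis using prod_qinv[OF k] by (simp add: prod.distrib)
  qed
  ultimately show ?thesis by (simp add: qpoch_N)
qed

lemma intg_qint2: "intg FF (qint2 j)"
  unfolding qint2_def by (intro intg_divide intg_diff intg_1 intg_qp unitf_1_q2[OF m1])
lemma intg_qint: "intg FF (qint j)"
  unfolding qint_def by (intro intg_divide intg_diff intg_1 intg_qp unitf_1_q[OF m1])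
lemma intg_a: "intg FF var_a" by (rule unitf_intg[OF unitf_a])
lemma intg_qpoch: "intg FF x \<Longrightarrow> intg FF (qpoch x pp k)"
  unfolding qpoch_def by (intro intg_prod intg_diff intg_1 intg_mult intg_pow intg_qn)

lemma cg_T: "k \<le> n \<Longrightarrow> cg FF (TT d t k) (CC * ff d t n k * BB d n k)"
proof -
  assume k: "k \<le> n"
  define A where "A = qint2 (2 * int d * int k + t) * (qint (2 * int d * int k + t))^2"
  define N where "N = qpoch YY pp k ^ 2 * qpoch (var_a * YY) pp k * qpoch (YY / var_a) pp k"
  define D where "D = qpoch pp pp k ^ 2 * qpoch (var_a * pp) pp k * qpoch (pp / var_a) pp k"
  define Qe where "Qe = var_q powi (- 4 * t * int k)"
  define M where "M = var_q powi (EE d n k) * (GG d n / GG d (n - k))"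
  have TT: "TT d t k = A * N / D * Qe" unfolding TT_def A_def N_def D_def Qe_def by simp
  have D: "D = GG d k" unfolding D_def by (rule qpoch_D)
  have uD: "unitf FF D" unfolding D using unitf_GG[OF m1 cdm] k nm by simp
  have iA: "intg FF A" unfolding A_def by (intro intg_mult intg_pow intg_qint intg_qint2)
  have iN: "intg FF N" unfolding N_def
    by (intro intg_mult intg_pow intg_qpoch intg_divide intg_qp intg_a unitf_a)
  have iM: "intg FF M" unfolding M_def
    by (intro intg_mult intg_qp intg_divide unitf_intg[OF unitf_GG[OF m1 cdm]] unitf_GG[OF m1 cdm]) (use nm in auto)
  have iQe: "intg FF Qe" unfolding Qe_def by (rule intg_qp)
  have c1: "cg FF N M" unfolding N_def M_def EE_def using cg_N[OF k] by simp
  have c2: "cg FF (A * N) (A * M)" by (rule cg_mult_left[OF c1 iA iN])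
  have c3: "cg FF (A * N / D) (A * M / D)" by (rule cg_divide[OF c2 uD])
  have c4: "cg FF (A * N / D * Qe) (A * M / D * Qe)"
    by (rule cg_mult[OF c3 cg_refl iQe]) (intro intg_divide intg_mult iA iM uD)
  have "A * M / D * Qe = CC * ff d t n k * BB d n k"
    unfolding A_def M_def D Qe_def CC_def ff_def BB_def qint2_def qint_def
    by (simp add: divide_inverse inverse_mult_distrib power2_eq_square ac_simps)
  then show ?thesis using c4 TT by simp
qed

lemma powi_double: "var_q powi (2 * u) = var_q powi u * var_q powi u"
proof -
  have "var_q powi (2 * u) = var_q powi (u + u)" by (simp only: mult_2)
  also have "\<dots> = var_q powi u * var_q powi u" by (rule power_int_add) (simp add: var_q_nz)
  finally show ?thesis .
qed

lemma cg_ff: "k \<le> n \<Longrightarrow> cg FF (ff d t n (n - k)) (- ff d t n k)"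
proof -
  assume k: "k \<le> n"
  define u where "u = 2 * int d * int k + t"
  define u' where "u' = 2 * int d * int (n - k) + t"
  define x where "x = var_q powi u"
  have x0: "x \<noteq> 0" unfolding x_def using var_q_nz by (simp add: power_int_not_zero)
  have uu: "u' + u = 2 * int m * s" unfolding u_def u'_def using k hts by (simp add: of_nat_diff algebra_simps)
  have c1: "cg FF (var_q powi u') (var_q powi (- u))"
    by (rule cg_q_powi[OF m1, of _ _ s]) (use uu in simp)
  have c2: "cg FF (var_q powi (2 * u')) (var_q powi (- (2 * u)))"
    by (rule cg_q_powi[OF m1, of _ _ "2 * s"]) (use uu in \<open>simp add: algebra_simps\<close>)
  define P' where "P' = var_q powi (EE d n (n - k)) * var_q powi (- 4 * t * int (n - k))"
  define P'' where "P'' = var_q powi (EE d n (n - k) - 4 * t * int (n - k) - 4 * u)"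
  have ff1: "ff d t n (n - k) = (1 - var_q powi (2 * u')) * (1 - var_q powi u') ^ 2 * P'"
    unfolding ff_def u'_def P'_def by simp
  have c3: "cg FF (ff d t n (n - k)) ((1 - var_q powi (- (2 * u))) * (1 - var_q powi (- u)) ^ 2 * P')"
    unfolding ff1
    by (intro cg_mult cg_diff cg_pow cg_refl c1 c2 intg_mult intg_diff intg_pow intg_1 intg_qp)
      (simp_all add: P'_def intg_mult intg_qp)
  have P'eq: "P' = P'' * (x * x * (x * x))"
  proof -
    have "P' = var_q powi (EE d n (n - k) + - 4 * t * int (n - k))"
      unfolding P'_def by (rule power_int_add[symmetric]) (simp add: var_q_nz)
    also have "\<dots> = var_q powi ((EE d n (n - k) - 4 * t * int (n - k) - 4 * u) + 2 * (2 * u))"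
      by (simp add: algebra_simps)
    also have "\<dots> = P'' * var_q powi (2 * (2 * u))"
      unfolding P''_def by (rule power_int_add) (simp add: var_q_nz)
    also have "var_q powi (2 * (2 * u)) = x * x * (x * x)"
      unfolding x_def by (simp only: powi_double)
    finally show ?thesis .
  qed
  have e1: "var_q powi (- u) = inverse x" unfolding x_def by (simp add: power_int_minus)
  have e2: "var_q powi (- (2 * u)) = inverse (x * x)" unfolding x_def by (simp add: power_int_minus powi_double)
  have e3: "var_q powi (2 * u) = x * x" unfolding x_def by (simp add: powi_double)
  have eq4: "(1 - var_q powi (- (2 * u))) * (1 - var_q powi (- u)) ^ 2 * P' =
      - ((1 - var_q powi (2 * u)) * (1 - var_q powi u) ^ 2) * P''"
    unfolding e1 e2 e3 P'eq using field_aux[OF x0] by (simp add: x_def)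
  have c5: "cg FF P'' (var_q powi (EE d n k) * var_q powi (- 4 * t * int k))"
  proof -
    have "var_q powi (EE d n k) * var_q powi (- 4 * t * int k) = var_q powi (EE d n k + - 4 * t * int k)"
      by (rule power_int_add[symmetric]) (simp add: var_q_nz)
    moreover have "cg FF P'' (var_q powi (EE d n k + - 4 * t * int k))"
      unfolding P''_def
    proof (rule cg_q_powi[OF m1, of _ _ "2 * s * (2 * int k - int n - 1)"])
      have ht: "t = int m * s - int d * int n" using hts by simp
      show "EE d n (n - k) - 4 * t * int (n - k) - 4 * u - (EE d n k + - 4 * t * int k) =
          2 * int m * (2 * s * (2 * int k - int n - 1))"
        unfolding EE_def u_def ht using k by (simp add: of_nat_diff algebra_simps)
    qed
    ultimately show ?thesis by simp
  qed
  have c6: "cg FF (- ((1 - var_q powi (2 * u)) * (1 - var_q powi u) ^ 2) * P'')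
      (- ((1 - var_q powi (2 * u)) * (1 - var_q powi u) ^ 2) * (var_q powi (EE d n k) * var_q powi (- 4 * t * int k)))"
    by (rule cg_mult_left[OF c5]) (simp_all add: P''_def intg_qp intg_minus intg_mult intg_pow intg_diff intg_1)
  have "- ff d t n k = - ((1 - var_q powi (2 * u)) * (1 - var_q powi u) ^ 2) * (var_q powi (EE d n k) * var_q powi (- 4 * t * int k))"
    unfolding ff_def u_def by simp
  then show ?thesis using cg_trans[OF c3[unfolded eq4] c6] by simp
qed

lemma intg_ff: "intg FF (ff d t n k)"
  unfolding ff_def by (intro intg_mult intg_pow intg_diff intg_1 intg_qp)
lemma intg_CC: "intg FF CC"
  unfolding CC_def by (intro unitf_intg unitf_inverse unitf_mult unitf_pow unitf_1_q2[OF m1] unitf_1_q[OF m1])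
lemma intg_BB: "k \<le> n \<Longrightarrow> intg FF (BB d n k)"
  unfolding BB_def using nm
  by (intro intg_divide unitf_intg[OF unitf_GG[OF m1 cdm]] unitf_mult unitf_GG[OF m1 cdm]) auto

lemma pair_c0: "k \<le> n \<Longrightarrow> c0 FF (TT d t k + TT d t (n - k))"
proof -
  assume k: "k \<le> n"
  have a1: "cg FF (TT d t k) (CC * ff d t n k * BB d n k)" by (rule cg_T[OF k])
  have "cg FF (TT d t (n - k)) (CC * ff d t n (n - k) * BB d n (n - k))" by (rule cg_T) simp
  moreover have "BB d n (n - k) = BB d n k" unfolding BB_def using k by (simp add: ac_simps)
  ultimately have a2: "cg FF (TT d t (n - k)) ((CC * BB d n k) * ff d t n (n - k))" by (simp add: ac_simps)
  have a3: "cg FF ((CC * BB d n k) * ff d t n (n - k)) ((CC * BB d n k) * (- ff d t n k))"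
    by (rule cg_mult_left[OF cg_ff[OF k]]) (simp_all add: intg_mult intg_CC intg_BB[OF k] intg_ff)
  have "cg FF (TT d t k + TT d t (n - k)) (CC * ff d t n k * BB d n k + (CC * BB d n k) * (- ff d t n k))"
    by (rule cg_add[OF a1 cg_trans[OF a2 a3]])
  then show ?thesis unfolding cg_def by (simp add: algebra_simps)
qed

lemma vanish_c0: "n < k \<Longrightarrow> k < m \<Longrightarrow> c0 FF (TT d t k)"
proof -
  assume k: "n < k" "k < m"
  define Q where "Q = qpoch YY pp k"
  define A where "A = qint2 (2 * int d * int k + t) * (qint (2 * int d * int k + t))^2"
  define Qa where "Qa = qpoch (var_a * YY) pp k"
  define Qi where "Qi = qpoch (YY / var_a) pp k"
  define D where "D = qpoch pp pp k ^ 2 * qpoch (var_a * pp) pp k * qpoch (pp / var_a) pp k"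
  define Qe where "Qe = var_q powi (- 4 * t * int k)"
  have TT: "TT d t k = Q * (A * (Q * Qa * Qi) / D * Qe)"
    unfolding TT_def Q_def A_def Qa_def Qi_def D_def Qe_def
    by (simp add: power2_eq_square divide_inverse ac_simps)
  have uD: "unitf FF D" unfolding D_def qpoch_D using unitf_GG[OF m1 cdm] k by simp
  have iQ: "intg FF Q" unfolding Q_def by (intro intg_qpoch intg_qp)
  have iR: "intg FF (A * (Q * Qa * Qi) / D * Qe)"
    unfolding A_def Qa_def Qi_def Qe_def
    by (intro intg_mult intg_divide intg_pow intg_qint intg_qint2 iQ uD intg_qpoch intg_qp intg_a unitf_a)
  have "c0 FF Q"
  proof -
    have fin: "finite {..<k}" by simp
    have nin: "n \<in> {..<k}" using k by simp
    have "Q = (1 - YY * pp ^ n) * (\<Prod>i\<in>{..<k} - {n}. 1 - YY * pp ^ i)"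
      unfolding Q_def qpoch_def by (rule prod.remove[OF fin nin])
    moreover have "c0 FF (1 - YY * pp ^ n)"
    proof -
      have "2 * t + 2 * int d * int n = 2 * (t + int d * int n)" by (simp add: algebra_simps)
      then have e: "2 * t + 2 * int d * int n = 2 * int m * s" using hts by simp
      have "YY * pp ^ n = var_q powi (2 * int m * s)" by (simp only: Yp_eq e)
      then have "1 - YY * pp ^ n = - (var_q powi (2 * int m * s) - 1)" by simp
      then show ?thesis using c0_minus[OF c0_q_powi[OF m1]] by simp
    qed
    moreover have "intg FF (\<Prod>i\<in>{..<k} - {n}. 1 - YY * pp ^ i)"
      by (intro intg_prod intg_diff intg_1 intg_mult intg_qp intg_pow intg_qn)
    ultimately show ?thesis by (simp add: c0_mult)
  qed
  then show ?thesis unfolding TT by (rule c0_mult[OF _ iR])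
qed

lemma sum_c0: "c0 FF (\<Sum>k<m. TT d t k)"
proof -
  have sub: "{..n} \<subseteq> {..<m}" using nm by auto
  have split: "(\<Sum>k<m. TT d t k) = (\<Sum>k\<in>{..<m} - {..n}. TT d t k) + (\<Sum>k\<le>n. TT d t k)"
    by (rule sum.subset_diff[OF sub]) simp
  have p1: "c0 FF (\<Sum>k\<in>{..<m} - {..n}. TT d t k)"
    by (rule c0_sum) (auto intro: vanish_c0)
  have rev: "(\<Sum>k\<le>n. TT d t (n - k)) = (\<Sum>k\<le>n. TT d t k)"
    using sum.nat_diff_reindex[of "\<lambda>k. TT d t k" "Suc n"] by (simp add: lessThan_Suc_atMost)
  have "c0 FF (\<Sum>k\<le>n. TT d t k + TT d t (n - k))"
    by (rule c0_sum) (auto intro: pair_c0)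
  moreover have "(\<Sum>k\<le>n. TT d t k + TT d t (n - k)) = (\<Sum>k\<le>n. TT d t k) * 2"
    by (simp add: sum.distrib rev)
  ultimately have "c0 FF ((\<Sum>k\<le>n. TT d t k) * 2)" by simp
  then have p2: "c0 FF (\<Sum>k\<le>n. TT d t k)" by (rule c0_cancel[OF _ unitf_2[OF m1]])
  show ?thesis unfolding split by (rule c0_add[OF p1 p2])
qed

end

lemma main_TT:
  fixes m d :: nat and t :: int
  assumes m1: "m > 1" and cdm: "coprime d m"
  shows "cong0_mod (\<Sum>k<m. TT d t k) (cyclo_q2 m)"
proof -
  obtain u v where uv: "u * int d + v * int m = 1"
    using bezout_int[of "int d" "int m"] cdm by (auto simp: coprime_iff_gcd_eq_1)
  define n0 where "n0 = (- t * u) mod int m"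
  have n0: "0 \<le> n0" "n0 < int m" using m1 unfolding n0_def by simp_all
  define n where "n = nat n0"
  have nm: "n < m" using n0 n_def by simp
  define s where "s = t * v - int d * ((- t * u) div int m)"
  have "t + int d * int n = int m * s"
  proof -
    have h: "n0 = - t * u - int m * ((- t * u) div int m)" unfolding n0_def by (simp add: minus_mult_div_eq_mod)
    have "int d * n0 = int d * (- t * u) - int d * int m * ((- t * u) div int m)"
      unfolding h by (simp add: algebra_simps)
    also have "int d * (- t * u) = - t * (u * int d)" by (simp add: algebra_simps)
    also have "u * int d = 1 - v * int m" using uv by simp
    finally have "int d * n0 = - t + int m * (t * v - int d * ((- t * u) div int m))"
      by (simp add: algebra_simps)
    then show ?thesis unfolding s_def n_def using n0 by simp
  qed
  then show ?thesis using sum_c0[OF m1 cdm nm] c0_cong0_mod by blast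
qed


theorem lemma3:
  fixes m d :: nat and t :: int
  assumes "m > 1" and "d \<ge> 2" and "coprime d m" and "coprime (int d) t"
  shows "cong0_mod
    (\<Sum>k<m. qint2 (2 * int d * int k + t) * (qint (2 * int d * int k + t))^2 *
       (qpoch (var_q powi (2 * t)) (var_q ^ (2 * d)) k ^ 2 *
        qpoch (var_a * var_q powi (2 * t)) (var_q ^ (2 * d)) k *
        qpoch (var_q powi (2 * t) / var_a) (var_q ^ (2 * d)) k) /
       (qpoch (var_q ^ (2 * d)) (var_q ^ (2 * d)) k ^ 2 *
        qpoch (var_a * var_q ^ (2 * d)) (var_q ^ (2 * d)) k *
        qpoch (var_q ^ (2 * d) / var_a) (var_q ^ (2 * d)) k) *
       var_q powi (- 4 * t * int k))
    (cyclo_q2 m)"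
  proof -
  have "cong0_mod (\<Sum>k<m. TT d t k) (cyclo_q2 m)" using main_TT[OF assms(1) assms(3)] .
  then show ?thesis unfolding TT_def .
qed

end
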